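(* Let $T$ be an $\mathcal O$-operator on a Lie algebra $\mathfrak g$ with respect to a representation $(V;\rho)$ and let $x\in\mathfrak g$ be a Nijenhuis element associated to $T$. Then $\rho(x)$ is a Nijenhuis operator on the pre-Lie algebra $(V,\cdot_T)$.
   Context: An $\mathcal O$-operator: linear $T:V\to\mathfrak g$ with $[Tu,Tv]=T(\rho(Tu)(v)-\rho(Tv)(u))$; it induces the pre-Lie product $u\cdot_Tv=\rho(Tu)(v)$ on $V$. An element $x\in\mathfrak g$ is a Nijenhuis element associated to $T$ if $[[x,y],[x,z]]=0$ for all $y,z\in\mathfrak g$, $\rho([x,y])\rho(x)=0$ for all $y\in\mathfrak g$, and $[x,[Tu,x]+T\rho(x)(u)]=0$ for all $u\in V$. A Nijenhuis operator on a pre-Lie algebra $(V,\cdot)$ is a linear $N:V\to V$ with $(Nu)\cdot(Nv)=N((Nu)\cdot v+u\cdot(Nv)-N(u\cdot v))$ for all $u,v\in V$. *)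

theory Defs
  imports Complex_Main
begin

definition lie_algebra :: "('k::field \<Rightarrow> 'g::ab_group_add \<Rightarrow> 'g) \<Rightarrow> ('g \<Rightarrow> 'g \<Rightarrow> 'g) \<Rightarrow> bool" where
  "lie_algebra sg br \<longleftrightarrow> vector_space sg
     \<and> (\<forall>x. Vector_Spaces.linear sg sg (br x))
     \<and> (\<forall>y. Vector_Spaces.linear sg sg (\<lambda>x. br x y))
     \<and> (\<forall>x. br x x = 0)
     \<and> (\<forall>x y z. br x (br y z) + br y (br z x) + br z (br x y) = 0)"

definition lie_representation ::
  "('k::field \<Rightarrow> 'g::ab_group_add \<Rightarrow> 'g) \<Rightarrow> ('g \<Rightarrow> 'g \<Rightarrow> 'g) \<Rightarrow>
   ('k \<Rightarrow> 'v::ab_group_add \<Rightarrow> 'v) \<Rightarrow> ('g \<Rightarrow> 'v \<Rightarrow> 'v) \<Rightarrow> bool" where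
  "lie_representation sg br sv rho \<longleftrightarrow> lie_algebra sg br \<and> vector_space sv
     \<and> (\<forall>x. Vector_Spaces.linear sv sv (rho x))
     \<and> (\<forall>x y v. rho (x + y) v = rho x v + rho y v)
     \<and> (\<forall>c x v. rho (sg c x) v = sv c (rho x v))
     \<and> (\<forall>x y v. rho (br x y) v = rho x (rho y v) - rho y (rho x v))"

definition O_operator ::
  "('k::field \<Rightarrow> 'g::ab_group_add \<Rightarrow> 'g) \<Rightarrow> ('g \<Rightarrow> 'g \<Rightarrow> 'g) \<Rightarrow>
   ('k \<Rightarrow> 'v::ab_group_add \<Rightarrow> 'v) \<Rightarrow> ('g \<Rightarrow> 'v \<Rightarrow> 'v) \<Rightarrow> ('v \<Rightarrow> 'g) \<Rightarrow> bool" where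
  "O_operator sg br sv rho T \<longleftrightarrow> Vector_Spaces.linear sv sg T
     \<and> (\<forall>u v. br (T u) (T v) = T (rho (T u) v - rho (T v) u))"

definition preLie_T :: "('g \<Rightarrow> 'v \<Rightarrow> 'v) \<Rightarrow> ('v \<Rightarrow> 'g) \<Rightarrow> 'v \<Rightarrow> 'v \<Rightarrow> 'v" where
  "preLie_T rho T u v = rho (T u) v"

definition nijenhuis_element ::
  "('g::ab_group_add \<Rightarrow> 'g \<Rightarrow> 'g) \<Rightarrow> ('g \<Rightarrow> 'v::ab_group_add \<Rightarrow> 'v) \<Rightarrow> ('v \<Rightarrow> 'g) \<Rightarrow> 'g \<Rightarrow> bool" where
  "nijenhuis_element br rho T x \<longleftrightarrow>
     (\<forall>y z. br (br x y) (br x z) = 0)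
     \<and> (\<forall>y v. rho (br x y) (rho x v) = 0)
     \<and> (\<forall>u. br x (br (T u) x + T (rho x u)) = 0)"

definition nijenhuis_operator ::
  "('k::field \<Rightarrow> 'v::ab_group_add \<Rightarrow> 'v) \<Rightarrow> ('v \<Rightarrow> 'v \<Rightarrow> 'v) \<Rightarrow> ('v \<Rightarrow> 'v) \<Rightarrow> bool" where
  "nijenhuis_operator sv mult N \<longleftrightarrow> Vector_Spaces.linear sv sv N
     \<and> (\<forall>u v. mult (N u) (N v) = N (mult (N u) v + mult u (N v) - N (mult u v)))"

end

theory Submission
  imports Defs
begin

lemma lin_add: "Vector_Spaces.linear s1 s2 f \<Longrightarrow> f (a + b) = f a + f b"
  unfolding Vector_Spaces.linear_def module_hom_def module_hom_axioms_def by blast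

lemma add_diff_hom: assumes "\<And>a b. f (a + b) = f a + (f b :: 'b::ab_group_add)"
  shows "f (a - b) = f a - f (b::'a::ab_group_add)" "f (- a) = - f a"
proof -
  have "f (a - b) + f b = f a" using assms[of "a-b" b] by simp
  thus "f (a - b) = f a - f b" by (simp add: eq_diff_eq)
  have "f (- a) + f a = f 0" using assms[of "-a" a] by simp
  moreover have "f 0 = 0" using assms[of 0 0] by simp
  ultimately show "f (- a) = - f a" by (simp add: eq_neg_iff_add_eq_0)
qed

theorem proposition4p11:
  fixes sg :: "'k::field \<Rightarrow> 'g::ab_group_add \<Rightarrow> 'g"
    and br :: "'g \<Rightarrow> 'g \<Rightarrow> 'g"
    and sv :: "'k \<Rightarrow> 'v::ab_group_add \<Rightarrow> 'v"
    and rho :: "'g \<Rightarrow> 'v \<Rightarrow> 'v"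
    and T :: "'v \<Rightarrow> 'g"
    and x :: 'g
  assumes "lie_representation sg br sv rho"
    and "O_operator sg br sv rho T"
    and "nijenhuis_element br rho T x"
  shows "nijenhuis_operator sv (preLie_T rho T) (rho x)"
proof -
  have LA: "lie_algebra sg br" and linr: "\<And>y. Vector_Spaces.linear sv sv (rho y)"
    and radd: "\<And>y z v. rho (y + z) v = rho y v + rho z v"
    and rbr: "\<And>y z v. rho (br y z) v = rho y (rho z v) - rho z (rho y v)"
    using assms(1) unfolding lie_representation_def by auto
  have linb: "\<And>y. Vector_Spaces.linear sg sg (br y)"
    and linb2: "\<And>y. Vector_Spaces.linear sg sg (\<lambda>z. br z y)"
    and alt: "\<And>y. br y y = 0"
    using LA unfolding lie_algebra_def by auto
  have N1: "\<And>y w. rho (br x y) (rho x w) = 0"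
    and N2: "\<And>u. br x (br (T u) x + T (rho x u)) = 0"
    using assms(3) unfolding nijenhuis_element_def by auto
  have radd': "\<And>y a b. rho y (a + b) = rho y a + rho y b" using lin_add[OF linr] by blast
  have rdiff: "\<And>y a b. rho y (a - b) = rho y a - rho y b"
    by (rule add_diff_hom(1)) (rule radd')
  have rneg: "\<And>y v. rho (- y) v = - rho y v"
    using add_diff_hom(2)[of "\<lambda>y. rho y v" for v] radd by blast
  have badd: "\<And>y a b. br y (a + b) = br y a + br y b" using lin_add[OF linb] by blast
  have bneg: "\<And>y a. br y (- a) = - br y a"
    using add_diff_hom(2)[of "br y" for y] badd by blast
  have badd2: "\<And>y a b. br (a + b) y = br a y + br b y" using lin_add[OF linb2] by blast
  have anti: "\<And>a b. br a b = - br b a"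
  proof -
    fix a b
    have "0 = br (a+b) (a+b)" using alt by simp
    also have "\<dots> = br a (a+b) + br b (a+b)" using badd2 by simp
    also have "\<dots> = br a b + br b a" using badd alt by simp
    finally show "br a b = - br b a" by (simp add: eq_neg_iff_add_eq_0)
  qed
  show ?thesis
    unfolding nijenhuis_operator_def preLie_T_def
  proof (intro conjI allI)
    show "Vector_Spaces.linear sv sv (rho x)" by (rule linr)
  next
    fix u v
    define a where "a = T u"
    define b where "b = T (rho x u)"
    have "br x b = - br x (br a x)"
      using N2[of u] badd unfolding a_def b_def by (simp add: eq_neg_iff_add_eq_0 add.commute)
    also have "\<dots> = br x (br x a)" using anti[of a x] bneg by simp
    finally have xb: "br x b = br x (br x a)" .
    have "rho b (rho x v) = rho x (rho b v) - rho (br x b) v"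
      using rbr[of x b v] by (simp add: algebra_simps)
    also have "rho (br x b) v = rho x (rho (br x a) v) - rho (br x a) (rho x v)"
      using xb rbr by simp
    also have "rho (br x a) (rho x v) = 0" by (rule N1)
    also have "rho x (rho (br x a) v) = rho x (rho x (rho a v)) - rho x (rho a (rho x v))"
      using rbr rdiff by simp
    finally have "rho b (rho x v) = rho x (rho b v) + rho x (rho a (rho x v)) - rho x (rho x (rho a v))"
      by (simp add: algebra_simps)
    also have "\<dots> = rho x (rho b v + rho a (rho x v) - rho x (rho a v))"
      using radd' rdiff by simp
    finally show "rho (T (rho x u)) (rho x v) =
        rho x (rho (T (rho x u)) v + rho (T u) (rho x v) - rho x (rho (T u) v))"
      unfolding a_def b_def .
  qed
qed

end
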